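(* Let $\Upsilon$ be a satisfiable label cover instance and let $\Gamma=(\tilde G,\tilde H)$ be any instance produced from it by the reduction described in the context. Then there exists an injective map $\varphi:V_{\tilde G}\to V_{\tilde H}$ that maps every edge of $\tilde G$ to an edge of $\tilde H$. Thus $\mathrm{OPT}_{QAP}(\Gamma)=|E_{\tilde G}|$.
   Context: A label cover instance $\Upsilon=(G=(V_G,E_G),\pi,[k])$ consists of a graph $G$ with $n=|V_G|$ vertices and edge set $E_G$, a label set $[k]=\{0,\dots,k-1\}$, and for each edge $(u,v)\in E_G$ a set $\pi_{uv}\subseteq[k]\times[k]$ of accepted label pairs. For a labeling $\Lambda:V_G\to[k]$, $\mathrm{Val}_{LC}(\Upsilon,\Lambda)=\frac{1}{|E_G|}\sum_{(u,v)\in E_G}\mathbf{1}[(\Lambda(u),\Lambda(v))\in\pi_{uv}]$, and $\mathrm{OPT}_{LC}(\Upsilon)=\max_\Lambda \mathrm{Val}_{LC}(\Upsilon,\Lambda)$; $\Upsilon$ is satisfiable if $\mathrm{OPT}_{LC}(\Upsilon)=1$. The reduction: let $N=\lceil n^4|E_G|k^5\rceil$ and $\alpha=1/n$. Set $V_{\tilde G}=V_G\times[N]$ and $V_{\tilde H}=V_G\times[k]\times[N]$. For every edge $(u,v)$ of $G$, independently choose a random set $\mathcal{E}_{uv}\subseteq[N]\times[N]$ containing each pair independently with probability $\alpha$. Let $E_{\tilde G}=\{((u,i),(v,j)):(u,v)\in E_G,(i,j)\in\mathcal{E}_{uv}\}$ and $E_{\tilde H}=\{((u,x,i),(v,y,j)):(u,v)\in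 E_G,(i,j)\in\mathcal{E}_{uv},(x,y)\in\pi_{uv}\}$. For an injective map $\varphi:V_{\tilde G}\to V_{\tilde H}$, $\mathrm{Val}_{QAP}(\Gamma,\varphi)=\sum_{(a,b)\in E_{\tilde G}}\mathbf{1}[(\varphi(a),\varphi(b))\in E_{\tilde H}]$, and $\mathrm{OPT}_{QAP}(\Gamma)$ is the maximum over injective maps. *)

theory Defs
  imports Complex_Main
begin

definition lc_instance :: "'v set \<Rightarrow> ('v \<times> 'v) set \<Rightarrow> ('v \<Rightarrow> 'v \<Rightarrow> (nat \<times> nat) set) \<Rightarrow> nat \<Rightarrow> bool" where
  "lc_instance V E \<pi> k \<longleftrightarrow> finite V \<and> E \<subseteq> V \<times> V \<and> 0 < k \<and>
     (\<forall>(u,v)\<in>E. \<pi> u v \<subseteq> {..<k} \<times> {..<k})"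

text \<open>Labelings V \<rightarrow> [k], taken extensional (value 0 outside V) so that there are finitely many.\<close>
definition labelings :: "'v set \<Rightarrow> nat \<Rightarrow> ('v \<Rightarrow> nat) set" where
  "labelings V k = {\<Lambda>. (\<forall>u\<in>V. \<Lambda> u < k) \<and> (\<forall>u. u \<notin> V \<longrightarrow> \<Lambda> u = 0)}"

definition val_LC :: "('v \<times> 'v) set \<Rightarrow> ('v \<Rightarrow> 'v \<Rightarrow> (nat \<times> nat) set) \<Rightarrow> ('v \<Rightarrow> nat) \<Rightarrow> real" where
  "val_LC E \<pi> \<Lambda> = (\<Sum>(u,v)\<in>E. if (\<Lambda> u, \<Lambda> v) \<in> \<pi> u v then 1 else 0) / real (card E)"

definition opt_LC :: "'v set \<Rightarrow> ('v \<times> 'v) set \<Rightarrow> ('v \<Rightarrow> 'v \<Rightarrow> (nat \<times> nat) set) \<Rightarrow> nat \<Rightarrow> real" where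
  "opt_LC V E \<pi> k = Max (val_LC E \<pi> ` labelings V k)"

definition satisfiable_LC :: "'v set \<Rightarrow> ('v \<times> 'v) set \<Rightarrow> ('v \<Rightarrow> 'v \<Rightarrow> (nat \<times> nat) set) \<Rightarrow> nat \<Rightarrow> bool" where
  "satisfiable_LC V E \<pi> k \<longleftrightarrow> opt_LC V E \<pi> k = 1"

definition red_N :: "'v set \<Rightarrow> ('v \<times> 'v) set \<Rightarrow> nat \<Rightarrow> nat" where
  "red_N V E k = nat \<lceil>real (card V) ^ 4 * real (card E) * real k ^ 5\<rceil>"

definition VGt :: "'v set \<Rightarrow> nat \<Rightarrow> ('v \<times> nat) set" where
  "VGt V N = V \<times> {..<N}"

definition VHt :: "'v set \<Rightarrow> nat \<Rightarrow> nat \<Rightarrow> ('v \<times> nat \<times> nat) set" where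
  "VHt V k N = V \<times> {..<k} \<times> {..<N}"

text \<open>\<E> u v is the (random) set \<E>_uv \<subseteq> [N] \<times> [N] chosen for edge (u,v).\<close>
definition EGt :: "('v \<times> 'v) set \<Rightarrow> ('v \<Rightarrow> 'v \<Rightarrow> (nat \<times> nat) set) \<Rightarrow> (('v \<times> nat) \<times> ('v \<times> nat)) set" where
  "EGt E \<E> = {((u,i),(v,j)) | u v i j. (u,v) \<in> E \<and> (i,j) \<in> \<E> u v}"

definition EHt :: "('v \<times> 'v) set \<Rightarrow> ('v \<Rightarrow> 'v \<Rightarrow> (nat \<times> nat) set) \<Rightarrow> ('v \<Rightarrow> 'v \<Rightarrow> (nat \<times> nat) set)
     \<Rightarrow> (('v \<times> nat \<times> nat) \<times> ('v \<times> nat \<times> nat)) set" where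
  "EHt E \<pi> \<E> = {((u,x,i),(v,y,j)) | u v x y i j. (u,v) \<in> E \<and> (i,j) \<in> \<E> u v \<and> (x,y) \<in> \<pi> u v}"

definition val_QAP :: "('a \<times> 'a) set \<Rightarrow> ('b \<times> 'b) set \<Rightarrow> ('a \<Rightarrow> 'b) \<Rightarrow> nat" where
  "val_QAP EG EH \<phi> = card {(a,b) \<in> EG. (\<phi> a, \<phi> b) \<in> EH}"

definition opt_QAP :: "'a set \<Rightarrow> ('a \<times> 'a) set \<Rightarrow> 'b set \<Rightarrow> ('b \<times> 'b) set \<Rightarrow> nat" where
  "opt_QAP VG EG VH EH = Max {val_QAP EG EH \<phi> | \<phi>. inj_on \<phi> VG \<and> \<phi> ` VG \<subseteq> VH}"

end

theory Submission
  imports Defs "HOL-Library.FuncSet"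
begin

lemma labelings_finite:
  assumes "finite V" shows "finite (labelings V k)"
proof -
  have inj: "inj_on (\<lambda>\<Lambda>. restrict \<Lambda> V) (labelings V k)"
  proof (rule inj_onI)
    fix f g assume f: "f \<in> labelings V k" and g: "g \<in> labelings V k"
      and eq: "restrict f V = restrict g V"
    show "f = g"
    proof
      fix x have "restrict f V x = restrict g V x" using eq by simp
      then show "f x = g x"
        using f g by (cases "x \<in> V") (auto simp: labelings_def)
    qed
  qed
  have "(\<lambda>\<Lambda>. restrict \<Lambda> V) ` labelings V k \<subseteq> PiE V (\<lambda>_. {..<k})"
    by (auto simp: labelings_def)
  hence "finite ((\<lambda>\<Lambda>. restrict \<Lambda> V) ` labelings V k)"
    using finite_PiE[OF assms, of "\<lambda>_. {..<k}"] finite_subset by blast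
  thus ?thesis using finite_imageD inj by blast
qed

lemma sat_labeling:
  assumes lc: "lc_instance V E \<pi> k" and sat: "satisfiable_LC V E \<pi> k"
  shows "\<exists>\<Lambda>\<in>labelings V k. \<forall>(u,v)\<in>E. (\<Lambda> u, \<Lambda> v) \<in> \<pi> u v"
proof -
  have fV: "finite V" and EV: "E \<subseteq> V \<times> V" and kp: "0 < k" using lc by (auto simp: lc_instance_def)
  have fE: "finite E" using EV fV finite_subset by blast
  have ne: "labelings V k \<noteq> {}" using kp by (auto simp: labelings_def intro!: exI[of _ "\<lambda>_. 0"])
  have "Max (val_LC E \<pi> ` labelings V k) \<in> val_LC E \<pi> ` labelings V k"
    using labelings_finite[OF fV] ne by (intro Max_in) auto
  then obtain \<Lambda> where L: "\<Lambda> \<in> labelings V k" and v1: "val_LC E \<pi> \<Lambda> = 1"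
    using sat by (auto simp: satisfiable_LC_def opt_LC_def)
  define f where "f = (\<lambda>(u,v). if (\<Lambda> u, \<Lambda> v) \<in> \<pi> u v then 1 else (0::real))"
  have S: "sum f E / real (card E) = 1" using v1 by (simp add: val_LC_def f_def)
  hence cE: "card E \<noteq> 0" by auto
  hence S2: "sum f E = real (card E)" using S by (simp add: divide_eq_1_iff)
  show ?thesis
  proof (intro bexI[OF _ L] ballI, clarify, rule ccontr)
    fix u v assume e: "(u,v) \<in> E" and n: "(\<Lambda> u, \<Lambda> v) \<notin> \<pi> u v"
    have "sum f E = sum f (E - {(u,v)}) + f (u,v)"
      using e fE by (simp add: sum.remove)
    also have "\<dots> = sum f (E - {(u,v)})" using n by (simp add: f_def)
    also have "\<dots> \<le> sum (\<lambda>_. 1) (E - {(u,v)})"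
      by (rule sum_mono) (auto simp: f_def split: prod.splits)
    also have "\<dots> = real (card (E - {(u,v)}))" by simp
    also have "\<dots> = real (card E) - 1"
    proof -
      have "card E \<ge> 1" using cE by simp
      moreover have "card (E - {(u,v)}) = card E - 1" using e by (simp add: card_Diff_singleton)
      ultimately show ?thesis by (simp add: of_nat_diff)
    qed
    finally show False using S2 by simp
  qed
qed

lemma mem_EGt: "(((u,i),(v,j)) \<in> EGt E \<E>) = ((u,v)\<in>E \<and> (i,j)\<in>\<E> u v)"
  unfolding EGt_def by blast
lemma mem_EHt: "(((u,x,i),(v,y,j)) \<in> EHt E \<pi> \<E>) = ((u,v)\<in>E \<and> (i,j)\<in>\<E> u v \<and> (x,y) \<in> \<pi> u v)"
  unfolding EHt_def by blast

theorem mainTheorem5: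
  fixes V :: "'v set" and E :: "('v \<times> 'v) set" and \<pi> :: "'v \<Rightarrow> 'v \<Rightarrow> (nat \<times> nat) set"
    and k :: nat and \<E> :: "'v \<Rightarrow> 'v \<Rightarrow> (nat \<times> nat) set"
  assumes "lc_instance V E \<pi> k"
    and "satisfiable_LC V E \<pi> k"
    and "\<forall>(u,v)\<in>E. \<E> u v \<subseteq> {..<red_N V E k} \<times> {..<red_N V E k}"
  shows "(\<exists>\<phi>. inj_on \<phi> (VGt V (red_N V E k)) \<and> \<phi> ` VGt V (red_N V E k) \<subseteq> VHt V k (red_N V E k)
            \<and> (\<forall>(a,b) \<in> EGt E \<E>. (\<phi> a, \<phi> b) \<in> EHt E \<pi> \<E>))
         \<and> opt_QAP (VGt V (red_N V E k)) (EGt E \<E>) (VHt V k (red_N V E k)) (EHt E \<pi> \<E>)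
             = card (EGt E \<E>)"
proof -
  define N where "N = red_N V E k"
  obtain \<Lambda> where L: "\<Lambda> \<in> labelings V k" and sat: "\<forall>(u,v)\<in>E. (\<Lambda> u, \<Lambda> v) \<in> \<pi> u v"
    using sat_labeling[OF assms(1,2)] by blast
  have fV: "finite V" and EV: "E \<subseteq> V \<times> V" using assms(1) by (auto simp: lc_instance_def)
  define \<phi> where "\<phi> = (\<lambda>(u::'v,i::nat). (u, \<Lambda> u, i))"
  have inj: "inj_on \<phi> (VGt V N)" by (auto simp: inj_on_def \<phi>_def)
  have img: "\<phi> ` VGt V N \<subseteq> VHt V k N" using L by (auto simp: \<phi>_def VGt_def VHt_def labelings_def)
  have edges: "\<forall>(a,b) \<in> EGt E \<E>. (\<phi> a, \<phi> b) \<in> EHt E \<pi> \<E>"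
  proof (intro ballI)
    fix p assume p: "p \<in> EGt E \<E>"
    obtain u i v j where pe: "p = ((u,i),(v,j))" by (metis prod.collapse)
    have "(u,v)\<in>E" "(i,j)\<in>\<E> u v" using p pe by (auto simp: mem_EGt)
    hence "(\<phi> (u,i), \<phi> (v,j)) \<in> EHt E \<pi> \<E>" using sat by (auto simp: \<phi>_def mem_EHt)
    thus "case p of (a,b) \<Rightarrow> (\<phi> a, \<phi> b) \<in> EHt E \<pi> \<E>" using pe by simp
  qed
  have sub: "EGt E \<E> \<subseteq> VGt V N \<times> VGt V N"
  proof
    fix p assume p: "p \<in> EGt E \<E>"
    obtain u i v j where pe: "p = ((u,i),(v,j))" by (metis prod.collapse)
    have uv: "(u,v)\<in>E" "(i,j)\<in>\<E> u v" using p pe by (auto simp: mem_EGt)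
    hence "i < N" "j < N" using assms(3) unfolding N_def by auto
    thus "p \<in> VGt V N \<times> VGt V N" using uv EV pe by (auto simp: VGt_def)
  qed
  have fEG: "finite (EGt E \<E>)"
    by (rule finite_subset[OF sub]) (simp add: VGt_def fV)
  define S where "S = {val_QAP (EGt E \<E>) (EHt E \<pi> \<E>) \<psi> | \<psi>. inj_on \<psi> (VGt V N) \<and> \<psi> ` VGt V N \<subseteq> VHt V k N}"
  have le: "\<forall>x\<in>S. x \<le> card (EGt E \<E>)"
    using fEG by (auto simp: S_def val_QAP_def intro!: card_mono)
  have "S \<subseteq> {..card (EGt E \<E>)}" using le by auto
  hence fS: "finite S" using finite_subset by blast
  have inS: "card (EGt E \<E>) \<in> S"
  proof -
    have "{(a,b) \<in> EGt E \<E>. (\<phi> a, \<phi> b) \<in> EHt E \<pi> \<E>} = EGt E \<E>" using edges by auto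
    hence "val_QAP (EGt E \<E>) (EHt E \<pi> \<E>) \<phi> = card (EGt E \<E>)"
      unfolding val_QAP_def by simp
    hence "card (EGt E \<E>) = val_QAP (EGt E \<E>) (EHt E \<pi> \<E>) \<phi> \<and> inj_on \<phi> (VGt V N) \<and> \<phi> ` VGt V N \<subseteq> VHt V k N"
      using inj img by simp
    thus ?thesis unfolding S_def by blast
  qed
  have "Max S = card (EGt E \<E>)"
    using fS inS le by (intro Max_eqI) auto
  hence "opt_QAP (VGt V N) (EGt E \<E>) (VHt V k N) (EHt E \<pi> \<E>) = card (EGt E \<E>)"
    by (simp add: opt_QAP_def S_def)
  note opt = this
  show ?thesis unfolding N_def[symmetric]
    by (rule conjI[OF exI[of _ \<phi>] opt]) (use inj img edges in simp)
qed

end
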